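(* The detour sequence of every path-unicyclic graph is full.
   Context: All graphs are finite and simple. A path-unicyclic graph is a graph obtained from a cycle $C$ by attaching pairwise vertex-disjoint paths to some (at least one, possibly all) of the vertices of $C$, at most one path per vertex of $C$, where each attached path meets $C$ only in one of its endvertices (the attached path being joined to $C$ at that vertex). The order of a path is its number of vertices. For a vertex $v$, $\tau(v)$ is the order of a longest path in the graph having $v$ as an endvertex. The detour sequence is the nondecreasing sequence $d_1\le\cdots\le d_n$ of the values $\tau(v)$ over all vertices. It is full if every integer $k$ with $d_1\le k\le d_n$ occurs in it, equivalently $d_i-d_{i-1}\le 1$ for all $2\le i\le n$. *)

theory Defs
  imports Main
begin

text \<open>A finite simple graph is given by a vertex set V and a symmetric,
irreflexive adjacency relation E.\<close>

definition gpath :: "'a set \<Rightarrow> ('a \<Rightarrow> 'a \<Rightarrow> bool) \<Rightarrow> 'a list \<Rightarrow> bool" where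
  "gpath V E xs \<longleftrightarrow> xs \<noteq> [] \<and> distinct xs \<and> set xs \<subseteq> V \<and>
     (\<forall>i. Suc i < length xs \<longrightarrow> E (xs ! i) (xs ! Suc i))"

definition tau :: "'a set \<Rightarrow> ('a \<Rightarrow> 'a \<Rightarrow> bool) \<Rightarrow> 'a \<Rightarrow> nat" where
  "tau V E v = Max {length xs | xs. gpath V E xs \<and> (hd xs = v \<or> last xs = v)}"

definition detour_full :: "'a set \<Rightarrow> ('a \<Rightarrow> 'a \<Rightarrow> bool) \<Rightarrow> bool" where
  "detour_full V E \<longleftrightarrow>
     (\<forall>k. Min (tau V E ` V) \<le> k \<and> k \<le> Max (tau V E ` V) \<longrightarrow> (\<exists>v\<in>V. tau V E v = k))"

text \<open>Path-unicyclic graph: cycle C (list of distinct vertices, length \<ge> 3,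
consecutive and last-first adjacent); for each cycle vertex c, P c lists the
new vertices of the path attached at c, in order away from c (P c = [] means
no path attached at c).\<close>
definition path_unicyclic :: "'a set \<Rightarrow> ('a \<Rightarrow> 'a \<Rightarrow> bool) \<Rightarrow> bool" where
  "path_unicyclic V E \<longleftrightarrow>
    (\<exists>(C :: 'a list) (P :: 'a \<Rightarrow> 'a list).
       distinct C \<and> 3 \<le> length C \<and>
       (\<forall>c\<in>set C. distinct (P c) \<and> set (P c) \<inter> set C = {}) \<and>
       (\<forall>c\<in>set C. \<forall>d\<in>set C. c \<noteq> d \<longrightarrow> set (P c) \<inter> set (P d) = {}) \<and>
       (\<exists>c\<in>set C. P c \<noteq> []) \<and>
       V = set C \<union> (\<Union>c\<in>set C. set (P c)) \<and>
       (\<forall>x y. E x y \<longleftrightarrow>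
          (\<exists>i<length C. {x, y} = {C ! i, C ! ((Suc i) mod length C)}) \<or>
          (\<exists>c\<in>set C. P c \<noteq> [] \<and> {x, y} = {c, hd (P c)}) \<or>
          (\<exists>c\<in>set C. \<exists>i. Suc i < length (P c) \<and> {x, y} = {P c ! i, P c ! Suc i})))"

end

theory Submission
  imports Defs
begin


lemma gpath_edge: "gpath V E xs \<Longrightarrow> Suc i < length xs \<Longrightarrow> E (xs!i) (xs!Suc i)"
  by (simp add: gpath_def)

lemma gpath_len_le: "finite V \<Longrightarrow> gpath V E xs \<Longrightarrow> length xs \<le> card V"
  unfolding gpath_def by (metis card_mono distinct_card)

lemma tau_set_finite: "finite V \<Longrightarrow> finite {length xs | xs. gpath V E xs \<and> (hd xs = v \<or> last xs = v)}"
proof -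
  assume f: "finite V"
  have "{length xs | xs. gpath V E xs \<and> (hd xs = v \<or> last xs = v)} \<subseteq> {..card V}"
    using gpath_len_le[OF f] by auto
  thus ?thesis using finite_subset by blast
qed

lemma tau_ge: assumes "finite V" "gpath V E xs" "hd xs = v \<or> last xs = v"
  shows "length xs \<le> tau V E v"
  unfolding tau_def by (rule Max_ge[OF tau_set_finite[OF assms(1)]]) (use assms in blast)

lemma gpath_rev: assumes s: "\<forall>x y. E x y \<longrightarrow> E y x" and g: "gpath V E xs"
  shows "gpath V E (rev xs)"
  unfolding gpath_def
proof (intro conjI allI impI)
  show "rev xs \<noteq> []" "distinct (rev xs)" "set (rev xs) \<subseteq> V" using g by (auto simp: gpath_def)
  fix i assume i: "Suc i < length (rev xs)"
  define j where "j = length xs - Suc (Suc i)"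
  have j1: "Suc j < length xs" using i by (simp add: j_def)
  have "E (xs!j) (xs!Suc j)" using gpath_edge[OF g j1] .
  hence "E (xs!Suc j) (xs!j)" using s by blast
  moreover have "rev xs ! i = xs ! Suc j" using i by (simp add: rev_nth j_def Suc_diff_Suc)
  moreover have "rev xs ! Suc i = xs ! j" using i by (simp add: rev_nth j_def)
  ultimately show "E (rev xs ! i) (rev xs ! Suc i)" by simp
qed

lemma tau_ex: assumes f: "finite V" and s: "\<forall>x y. E x y \<longrightarrow> E y x" and v: "v \<in> V"
  shows "\<exists>Q. gpath V E Q \<and> hd Q = v \<and> length Q = tau V E v"
proof -
  let ?S = "{length xs | xs. gpath V E xs \<and> (hd xs = v \<or> last xs = v)}"
  have "gpath V E [v]" using v by (simp add: gpath_def)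
  hence "?S \<noteq> {}" by force
  hence "tau V E v \<in> ?S" unfolding tau_def using Max_in[OF tau_set_finite[OF f]] by blast
  then obtain xs where xs: "gpath V E xs" "hd xs = v \<or> last xs = v" "length xs = tau V E v" by auto
  show ?thesis
  proof (cases "hd xs = v")
    case True thus ?thesis using xs by blast
  next
    case False
    hence "last xs = v" using xs by blast
    moreover have "xs \<noteq> []" using xs by (simp add: gpath_def)
    ultimately have "hd (rev xs) = v" by (simp add: hd_rev)
    thus ?thesis using gpath_rev[OF s xs(1)] xs(3) by (metis length_rev)
  qed
qed

lemma gpath_Cons: assumes "gpath V E Q" "y \<in> V" "y \<notin> set Q" "E y (hd Q)"
  shows "gpath V E (y#Q)"
  unfolding gpath_def
proof (intro conjI allI impI)
  show "y # Q \<noteq> []" by simp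
  show "distinct (y#Q)" "set (y#Q) \<subseteq> V" using assms by (auto simp: gpath_def)
  fix i assume i: "Suc i < length (y#Q)"
  show "E ((y # Q) ! i) ((y # Q) ! Suc i)"
  proof (cases i)
    case 0 thus ?thesis using assms by (simp add: gpath_def hd_conv_nth)
  next
    case (Suc i') thus ?thesis using assms i by (simp add: gpath_def)
  qed
qed

lemma gpath_tl: assumes g: "gpath V E Q" and l: "2 \<le> length Q"
  shows "gpath V E (tl Q)" "hd (tl Q) = Q!1" "length (tl Q) = length Q - 1"
proof -
  show "gpath V E (tl Q)" unfolding gpath_def
  proof (intro conjI allI impI)
    show "tl Q \<noteq> []" using l by (cases Q) auto
    show "distinct (tl Q)" using g by (simp add: gpath_def distinct_tl)
    have "set (tl Q) \<subseteq> set Q" by (cases Q) auto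
    thus "set (tl Q) \<subseteq> V" using g by (auto simp: gpath_def)
    fix i assume "Suc i < length (tl Q)"
    thus "E (tl Q ! i) (tl Q ! Suc i)" using g by (simp add: gpath_def nth_tl)
  qed
  have "tl Q \<noteq> []" using l by (cases Q) auto
  thus "hd (tl Q) = Q!1" by (cases Q) (auto simp: hd_conv_nth)
  show "length (tl Q) = length Q - 1" by simp
qed

lemma step_lemma: "P (a::nat) \<Longrightarrow> \<not> P i \<Longrightarrow> a \<le> i \<Longrightarrow> \<exists>j. a \<le> j \<and> j < i \<and> P j \<and> \<not> P (Suc j)"
proof (induction i)
  case 0 thus ?case by auto
next
  case (Suc i)
  show ?case
  proof (cases "a = Suc i")
    case True thus ?thesis using Suc by auto
  next
    case False
    hence "a \<le> i" using Suc by auto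
    show ?thesis
    proof (cases "P i")
      case True thus ?thesis using Suc \<open>a \<le> i\<close> by auto
    next
      case False
      then obtain j where "a \<le> j \<and> j < i \<and> P j \<and> \<not> P (Suc j)" using Suc.IH Suc.prems \<open>a \<le> i\<close> by blast
      thus ?thesis by (intro exI[of _ j]) auto
    qed
  qed
qed

lemma ivt: "(\<forall>m. m < j \<longrightarrow> f (Suc m) \<le> f m + 1 \<and> f m \<le> f (Suc m) + 1) \<Longrightarrow> i \<le> j \<Longrightarrow>
   (f i \<le> k \<and> k \<le> f j) \<or> (f j \<le> k \<and> k \<le> f i) \<Longrightarrow> \<exists>m. i \<le> m \<and> m \<le> j \<and> f m = (k::nat)"
proof (induction j)
  case 0 thus ?case by auto
next
  case (Suc j)
  show ?case
  proof (cases "i = Suc j")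
    case True thus ?thesis using Suc.prems(3) by (intro exI[of _ i]) auto
  next
    case False
    hence ij: "i \<le> j" using Suc.prems(2) by simp
    have p1: "\<forall>m. m < j \<longrightarrow> f (Suc m) \<le> f m + 1 \<and> f m \<le> f (Suc m) + 1" using Suc.prems(1) by simp
    have st: "f (Suc j) \<le> f j + 1" "f j \<le> f (Suc j) + 1" using Suc.prems(1) by simp_all
    show ?thesis
    proof (cases "(f i \<le> k \<and> k \<le> f j) \<or> (f j \<le> k \<and> k \<le> f i)")
      case True
      from Suc.IH[OF p1 ij True] obtain m where "i \<le> m" "m \<le> j" "f m = k" by blast
      thus ?thesis by (intro exI[of _ m]) simp
    next
      case False
      hence "f (Suc j) = k" using Suc.prems(3) st by linarith
      thus ?thesis using ij by (intro exI[of _ "Suc j"]) simp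
    qed
  qed
qed

lemma bridge_tau:
  assumes f: "finite V" and s: "\<forall>x y. E x y \<longrightarrow> E y x" and x: "x \<in> V" and y: "y \<in> V" and e: "E x y"
    and c: "\<forall>Q. gpath V E Q \<longrightarrow> hd Q = x \<longrightarrow> y \<in> set Q \<longrightarrow> Q!1 = y"
  shows "tau V E x \<le> tau V E y + 1"
proof -
  obtain Q where Q: "gpath V E Q" "hd Q = x" "length Q = tau V E x" using tau_ex[OF f s x] by blast
  show ?thesis
  proof (cases "y \<in> set Q")
    case False
    have "gpath V E (y#Q)" using gpath_Cons[OF Q(1) y False] Q(2) e s by blast
    from tau_ge[OF f this] have "length (y#Q) \<le> tau V E y" by simp
    thus ?thesis using Q by simp
  next
    case True
    show ?thesis
    proof (cases "y = x")
      case True thus ?thesis by simp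
    next
      case False
      have ne: "Q \<noteq> []" using Q by (simp add: gpath_def)
      have l: "2 \<le> length Q"
      proof (rule ccontr)
        assume "\<not> 2 \<le> length Q"
        hence "length (tl Q) = 0" by simp
        hence "tl Q = []" by blast
        hence "Q = [x]" using Q(2) ne by (metis list.collapse)
        thus False using True False by simp
      qed
      have "Q!1 = y" using c[rule_format, OF Q(1) Q(2) True] .
      hence "gpath V E (tl Q)" "hd (tl Q) = y" "length (tl Q) = length Q - 1"
        using gpath_tl[OF Q(1) l] by auto
      hence "length (tl Q) \<le> tau V E y" using tau_ge[OF f, of E "tl Q" y] by blast
      thus ?thesis using Q by simp
    qed
  qed
qed

lemma cut1:
  assumes cr: "\<forall>x y. E x y \<longrightarrow> x \<in> S \<longrightarrow> y \<notin> S \<longrightarrow> x = a \<and> y = b"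
    and a: "a \<in> S" and b: "b \<notin> S" and g: "gpath V E Q" and h: "hd Q = a" and bq: "b \<in> set Q"
  shows "Q!1 = b"
proof -
  obtain i where i: "i < length Q" "Q!i = b" using bq by (meson in_set_conv_nth)
  have ne: "Q \<noteq> []" using g by (simp add: gpath_def)
  have q0: "Q!0 = a" using h ne by (simp add: hd_conv_nth)
  obtain j where j: "0 \<le> j" "j < i" "Q!j \<in> S" "Q!Suc j \<notin> S"
    using step_lemma[of "\<lambda>j. Q!j \<in> S" 0 i] q0 a i b by auto
  have "E (Q!j) (Q!Suc j)" using gpath_edge[OF g] j i by simp
  hence "Q!j = a \<and> Q!Suc j = b" using cr j(3,4) by blast
  hence "Q!j = a" "Q!Suc j = b" by simp_all
  hence "Q!j = Q!0" using q0 by simp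
  moreover have "distinct Q" using g by (simp add: gpath_def)
  moreover have "j < length Q" "0 < length Q" using i(1) j(2) by linarith+
  ultimately have "j = 0" using nth_eq_iff_index_eq by blast
  thus ?thesis using \<open>Q!Suc j = b\<close> by simp
qed

lemma cut2:
  assumes cr: "\<forall>x y. E x y \<longrightarrow> x \<in> S \<longrightarrow> y \<notin> S \<longrightarrow> x = a \<and> y = b"
    and s: "\<forall>x y. E x y \<longrightarrow> E y x"
    and a: "a \<in> S" and b: "b \<notin> S" and g: "gpath V E Q" and h: "hd Q = b" and aq: "a \<in> set Q"
  shows "Q!1 = a"
proof -
  obtain i where i: "i < length Q" "Q!i = a" using aq by (meson in_set_conv_nth)
  have ne: "Q \<noteq> []" using g by (simp add: gpath_def)
  have q0: "Q!0 = b" using h ne by (simp add: hd_conv_nth)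
  obtain j where j: "0 \<le> j" "j < i" "Q!j \<notin> S" "Q!Suc j \<in> S"
    using step_lemma[of "\<lambda>j. Q!j \<notin> S" 0 i] q0 a i b by auto
  have "E (Q!j) (Q!Suc j)" using gpath_edge[OF g] j i by simp
  hence "E (Q!Suc j) (Q!j)" using s by blast
  hence "Q!Suc j = a \<and> Q!j = b" using cr j(3,4) by blast
  hence "Q!Suc j = a" "Q!j = b" by simp_all
  hence "Q!j = Q!0" using q0 by simp
  moreover have "distinct Q" using g by (simp add: gpath_def)
  moreover have "j < length Q" "0 < length Q" using i(1) j(2) by linarith+
  ultimately have "j = 0" using nth_eq_iff_index_eq by blast
  thus ?thesis using \<open>Q!Suc j = a\<close> by simp
qed

lemma chain: assumes h: "g a \<noteq> g b" "a < n" "b < (n::nat)"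
  shows "\<exists>i. Suc i < n \<and> g i \<noteq> g (Suc i)"
proof -
  obtain c where c: "c < n" "g c \<noteq> g 0" using h by metis
  obtain j where "0 \<le> j" "j < c" "g j = g 0" "g (Suc j) \<noteq> g 0"
    using step_lemma[of "\<lambda>j. g j = g 0" 0 c] c by auto
  thus ?thesis using c by (intro exI[of _ j]) auto
qed



locale pu =
  fixes V :: "'a set" and E :: "'a \<Rightarrow> 'a \<Rightarrow> bool" and C :: "'a list" and P :: "'a \<Rightarrow> 'a list"
  assumes dC: "distinct C" and lenC: "3 \<le> length C"
  and dP: "\<forall>c\<in>set C. distinct (P c) \<and> set (P c) \<inter> set C = {}"
  and dPP: "\<forall>c\<in>set C. \<forall>d\<in>set C. c \<noteq> d \<longrightarrow> set (P c) \<inter> set (P d) = {}"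
  and Vdef: "V = set C \<union> (\<Union>c\<in>set C. set (P c))"
  and Edef: "\<forall>x y. E x y \<longleftrightarrow>
          (\<exists>i<length C. {x, y} = {C ! i, C ! ((Suc i) mod length C)}) \<or>
          (\<exists>c\<in>set C. P c \<noteq> [] \<and> {x, y} = {c, hd (P c)}) \<or>
          (\<exists>c\<in>set C. \<exists>i. Suc i < length (P c) \<and> {x, y} = {P c ! i, P c ! Suc i})"
begin

lemma finV: "finite V" using Vdef by simp

definition R :: "'a set \<Rightarrow> bool" where
  "R s \<longleftrightarrow> (\<exists>i<length C. s = {C ! i, C ! ((Suc i) mod length C)}) \<or>
          (\<exists>c\<in>set C. P c \<noteq> [] \<and> s = {c, hd (P c)}) \<or>
          (\<exists>c\<in>set C. \<exists>i. Suc i < length (P c) \<and> s = {P c ! i, P c ! Suc i})"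

lemma ER: "E x y \<longleftrightarrow> R {x, y}"
  unfolding R_def using Edef by simp

lemma symE: "\<forall>x y. E x y \<longrightarrow> E y x"
  by (simp add: ER insert_commute)

lemma disj: "c \<in> set C \<Longrightarrow> z \<in> set (P c) \<Longrightarrow> z \<notin> set C" using dP by blast

lemma disjP: "c \<in> set C \<Longrightarrow> d \<in> set C \<Longrightarrow> z \<in> set (P c) \<Longrightarrow> z \<in> set (P d) \<Longrightarrow> c = d"
  using dPP by blast

lemma nbr:
  assumes j: "j < length C" and e: "E x (C!j)"
  shows "x \<in> set (P (C!j)) \<or> x = C!((Suc j) mod length C) \<or> x = C!((j + length C - 1) mod length C)"
proof -
  let ?n = "length C"
  have cj: "C!j \<in> set C" using j by simp
  from e have "R {x, C!j}" by (simp add: ER)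
  then consider
    (a) i where "i < ?n" "{x, C!j} = {C ! i, C ! ((Suc i) mod ?n)}"
  | (b) c where "c \<in> set C" "P c \<noteq> []" "{x, C!j} = {c, hd (P c)}"
  | (c) c i where "c \<in> set C" "Suc i < length (P c)" "{x, C!j} = {P c ! i, P c ! Suc i}"
    unfolding R_def by blast
  thus ?thesis
  proof cases
    case a
    have "0 < ?n" using j by linarith
    hence sm: "Suc i mod ?n < ?n" by (rule mod_less_divisor)
    from a(2) have "(x = C!i \<and> C!j = C!(Suc i mod ?n)) \<or> (x = C!(Suc i mod ?n) \<and> C!j = C!i)"
      by (auto simp: doubleton_eq_iff)
    thus ?thesis
    proof
      assume h: "x = C!i \<and> C!j = C!(Suc i mod ?n)"
      hence "j = Suc i mod ?n" using nth_eq_iff_index_eq[OF dC j sm] by simp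
      moreover have "i = (j + ?n - 1) mod ?n"
      proof (cases "Suc i < ?n")
        case True
        hence "j = Suc i" using \<open>j = Suc i mod ?n\<close> by simp
        thus ?thesis using a(1) by simp
      next
        case False
        hence "Suc i = ?n" using a(1) by simp
        hence "j = 0" using \<open>j = Suc i mod ?n\<close> by simp
        thus ?thesis using a(1) \<open>Suc i = ?n\<close> by simp
      qed
      ultimately show ?thesis using h by simp
    next
      assume h: "x = C!(Suc i mod ?n) \<and> C!j = C!i"
      hence "j = i" using nth_eq_iff_index_eq[OF dC j a(1)] by simp
      thus ?thesis using h by simp
    qed
  next
    case b
    from b(3) have "(x = c \<and> C!j = hd (P c)) \<or> (x = hd (P c) \<and> C!j = c)"
      by (auto simp: doubleton_eq_iff)
    thus ?thesis
    proof
      assume "x = c \<and> C!j = hd (P c)"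
      hence "C!j \<in> set (P c)" using b(2) by simp
      thus ?thesis using disj[OF b(1)] cj by blast
    next
      assume "x = hd (P c) \<and> C!j = c"
      thus ?thesis using b(2) by simp
    qed
  next
    case c
    have "C!j \<in> set (P c)" using c(2,3) by (auto simp: doubleton_eq_iff)
    thus ?thesis using disj[OF c(1)] cj by blast
  qed
qed

lemma crossP:
  assumes c: "c \<in> set C" and e: "E x y" and x: "x \<in> set (P c)" and y: "y \<notin> set (P c)"
  shows "y = c"
proof -
  from e have "R {x, y}" by (simp add: ER)
  then consider
    (a) i where "i < length C" "{x, y} = {C ! i, C ! ((Suc i) mod length C)}"
  | (b) c' where "c' \<in> set C" "P c' \<noteq> []" "{x, y} = {c', hd (P c')}"
  | (c) c' i where "c' \<in> set C" "Suc i < length (P c')" "{x, y} = {P c' ! i, P c' ! Suc i}"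
    unfolding R_def by blast
  thus ?thesis
  proof cases
    case a
    have "0 < length C" using lenC by linarith
    hence "Suc i mod length C < length C" by (rule mod_less_divisor)
    hence "C ! i \<in> set C" "C ! (Suc i mod length C) \<in> set C" using a(1) by simp_all
    hence "x \<in> set C" using a(2) by (auto simp: doubleton_eq_iff)
    thus ?thesis using disj[OF c x] by blast
  next
    case b
    from b(3) have "(x = c' \<and> y = hd (P c')) \<or> (x = hd (P c') \<and> y = c')"
      by (auto simp: doubleton_eq_iff)
    thus ?thesis
    proof
      assume "x = c' \<and> y = hd (P c')"
      thus ?thesis using disj[OF c x] b(1) by blast
    next
      assume h: "x = hd (P c') \<and> y = c'"
      hence "x \<in> set (P c')" using b(2) by simp
      hence "c = c'" using disjP[OF c b(1) x] by simp
      thus ?thesis using h by simp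
    qed
  next
    case c
    have xy: "x \<in> set (P c')" "y \<in> set (P c')" using c(2,3) by (auto simp: doubleton_eq_iff)
    hence "c = c'" using disjP[OF \<open>c \<in> set C\<close> c(1) x] by simp
    thus ?thesis using xy y by simp
  qed
qed


lemma inV: "c \<in> set C \<Longrightarrow> c \<in> V" "c \<in> set C \<Longrightarrow> z \<in> set (P c) \<Longrightarrow> z \<in> V"
  using Vdef by auto

lemma pend_cross:
  assumes c: "c \<in> set C" and m: "m < length (P c)"
  shows "\<forall>x y. E x y \<longrightarrow> x \<in> {P c ! i | i. m \<le> i \<and> i < length (P c)} \<longrightarrow>
     y \<notin> {P c ! i | i. m \<le> i \<and> i < length (P c)} \<longrightarrow> x = P c ! m \<and> y = (c # P c) ! m"
proof (intro allI impI)
  fix x y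
  let ?S = "{P c ! i | i. m \<le> i \<and> i < length (P c)}"
  let ?p = "P c"
  assume e: "E x y" and x: "x \<in> ?S" and y: "y \<notin> ?S"
  obtain a where a: "m \<le> a" "a < length ?p" "x = ?p ! a" using x by blast
  have dp: "distinct ?p" using dP c by blast
  have xp: "x \<in> set ?p" using a by simp
  from e have "R {x, y}" by (simp add: ER)
  then consider
    (a) i where "i < length C" "{x, y} = {C ! i, C ! ((Suc i) mod length C)}"
  | (b) c' where "c' \<in> set C" "P c' \<noteq> []" "{x, y} = {c', hd (P c')}"
  | (c) c' i where "c' \<in> set C" "Suc i < length (P c')" "{x, y} = {P c' ! i, P c' ! Suc i}"
    unfolding R_def by blast
  thus "x = P c ! m \<and> y = (c # P c) ! m"
  proof cases
    case a
    have "0 < length C" using lenC by linarith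
    hence "Suc i mod length C < length C" by (rule mod_less_divisor)
    hence "C ! i \<in> set C" "C ! (Suc i mod length C) \<in> set C" using a(1) by simp_all
    hence "x \<in> set C" using a(2) by (auto simp: doubleton_eq_iff)
    thus ?thesis using disj[OF c xp] by blast
  next
    case b
    from b(3) have "(x = c' \<and> y = hd (P c')) \<or> (x = hd (P c') \<and> y = c')"
      by (auto simp: doubleton_eq_iff)
    thus ?thesis
    proof
      assume "x = c' \<and> y = hd (P c')"
      thus ?thesis using disj[OF c xp] b(1) by blast
    next
      assume h: "x = hd (P c') \<and> y = c'"
      hence "x \<in> set (P c')" using b(2) by simp
      hence cc: "c = c'" using disjP[OF c b(1) xp] by simp
      have "x = ?p ! 0" using h b(2) cc by (simp add: hd_conv_nth)
      moreover have "0 < length ?p" using a(2) by linarith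
      ultimately have "a = 0" using nth_eq_iff_index_eq[OF dp a(2), of 0] a by simp
      hence "m = 0" using a by simp
      thus ?thesis using h cc \<open>x = ?p ! 0\<close> by simp
    qed
  next
    case c
    have xy: "x \<in> set (P c')" "y \<in> set (P c')" using c(2,3) by (auto simp: doubleton_eq_iff)
    hence cc: "c = c'" using disjP[OF \<open>c \<in> set C\<close> c(1) xp] by simp
    have il: "i < length ?p" "Suc i < length ?p" using c(2) cc by simp_all
    from c(3) have "(x = ?p ! i \<and> y = ?p ! Suc i) \<or> (x = ?p ! Suc i \<and> y = ?p ! i)"
      using cc by (auto simp: doubleton_eq_iff)
    thus ?thesis
    proof
      assume h: "x = ?p ! i \<and> y = ?p ! Suc i"
      hence "a = i" using nth_eq_iff_index_eq[OF dp a(2) il(1)] a by simp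
      hence "m \<le> Suc i" using a by simp
      hence "y \<in> ?S" using h il(2) by auto
      thus ?thesis using y by blast
    next
      assume h: "x = ?p ! Suc i \<and> y = ?p ! i"
      hence ai: "a = Suc i" using nth_eq_iff_index_eq[OF dp a(2) il(2)] a by simp
      have "\<not> m \<le> i" using h y il by blast
      hence "m = Suc i" using ai a by simp
      thus ?thesis using h by simp
    qed
  qed
qed

lemma pend_step:
  assumes c: "c \<in> set C" and m: "m < length (P c)"
  shows "tau V E ((c # P c) ! m) \<le> tau V E (P c ! m) + 1 \<and> tau V E (P c ! m) \<le> tau V E ((c # P c) ! m) + 1"
proof -
  let ?S = "{P c ! i | i. m \<le> i \<and> i < length (P c)}"
  let ?p = "P c"
  let ?a = "?p ! m" and ?b = "(c # ?p) ! m"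
  have dp: "distinct ?p" using dP c by blast
  have aS: "?a \<in> ?S" using m by blast
  have bS: "?b \<notin> ?S"
  proof (cases m)
    case 0
    have "c \<notin> set ?p" using disj[OF c] c by blast
    thus ?thesis using 0 nth_mem by fastforce
  next
    case (Suc m')
    show ?thesis
    proof
      assume "?b \<in> ?S"
      then obtain i where i: "m \<le> i" "i < length ?p" "?p ! m' = ?p ! i" using Suc by auto
      hence "m' = i" using nth_eq_iff_index_eq[OF dp _ i(2), of m'] m Suc by simp
      thus False using i Suc by simp
    qed
  qed
  have e: "E ?a ?b"
  proof (cases m)
    case 0
    have "?p \<noteq> []" using m by auto
    moreover have "{?a, ?b} = {c, hd ?p}" using 0 \<open>?p \<noteq> []\<close> by (auto simp: hd_conv_nth)
    ultimately have "R {?a, ?b}" unfolding R_def using c by blast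
    thus ?thesis by (simp add: ER)
  next
    case (Suc m')
    have "{?a, ?b} = {?p ! m', ?p ! Suc m'}" using Suc by auto
    hence "R {?a, ?b}" unfolding R_def using c m Suc by blast
    thus ?thesis by (simp add: ER)
  qed
  have e2: "E ?b ?a" using e symE by blast
  have cr: "\<forall>x y. E x y \<longrightarrow> x \<in> ?S \<longrightarrow> y \<notin> ?S \<longrightarrow> x = ?a \<and> y = ?b"
    using pend_cross[OF c m] .
  have aV: "?a \<in> V" using inV(2)[OF c] m by simp
  have bV: "?b \<in> V" using inV[OF c] m by (cases m) auto
  have c1: "\<forall>Q. gpath V E Q \<longrightarrow> hd Q = ?a \<longrightarrow> ?b \<in> set Q \<longrightarrow> Q!1 = ?b"
    using cut1[OF cr aS bS] by blast
  have c2: "\<forall>Q. gpath V E Q \<longrightarrow> hd Q = ?b \<longrightarrow> ?a \<in> set Q \<longrightarrow> Q!1 = ?a"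
    using cut2[OF cr symE aS bS] by blast
  have 1: "tau V E ?a \<le> tau V E ?b + 1" by (rule bridge_tau[OF finV symE aV bV e c1])
  have 2: "tau V E ?b \<le> tau V E ?a + 1" by (rule bridge_tau[OF finV symE bV aV e2 c2])
  show ?thesis using 1 2 by simp
qed

lemma pend_ivt:
  assumes c: "c \<in> set C" and x: "x \<in> set (c # P c)" and y: "y \<in> set (c # P c)"
    and k: "tau V E x \<le> k" "k \<le> tau V E y"
  shows "\<exists>z\<in>set (c # P c). tau V E z = k"
proof -
  let ?s = "c # P c"
  define f where "f i = tau V E (?s ! i)" for i
  obtain a where a: "a < length ?s" "?s ! a = x" using x by (meson in_set_conv_nth)
  obtain b where b: "b < length ?s" "?s ! b = y" using y by (meson in_set_conv_nth)
  have st: "\<forall>m. m < j \<longrightarrow> f (Suc m) \<le> f m + 1 \<and> f m \<le> f (Suc m) + 1" if "j < length ?s" for j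
  proof (intro allI impI)
    fix m assume "m < j"
    hence "m < length (P c)" using that by simp
    from pend_step[OF c this] show "f (Suc m) \<le> f m + 1 \<and> f m \<le> f (Suc m) + 1"
      unfolding f_def by simp
  qed
  have fa: "f a = tau V E x" "f b = tau V E y" using a b by (simp_all add: f_def)
  obtain m where "m < length ?s" "f m = k"
  proof (cases "a \<le> b")
    case True
    from ivt[OF st[OF b(1)] True, of k] fa k obtain m where "a \<le> m" "m \<le> b" "f m = k" by auto
    thus ?thesis using b(1) by (intro that[of m]) auto
  next
    case False
    hence "b \<le> a" by simp
    from ivt[OF st[OF a(1)] this, of k] fa k obtain m where "b \<le> m" "m \<le> a" "f m = k" by auto
    thus ?thesis using a(1) by (intro that[of m]) auto
  qed
  thus ?thesis unfolding f_def by (metis nth_mem)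
qed


lemma F4:
  assumes v: "v \<in> set C" and u: "u \<in> set C" and e: "E u v" and t: "tau V E v + 2 \<le> tau V E u"
  shows "\<exists>w\<in>set (P v). tau V E u \<le> tau V E w"
proof -
  have uV: "u \<in> V" "v \<in> V" using inV(1) u v by auto
  obtain Q where Q: "gpath V E Q" "hd Q = u" "length Q = tau V E u"
    using tau_ex[OF finV symE uV(1)] by blast
  have ne: "Q \<noteq> []" and dQ: "distinct Q" using Q(1) by (simp_all add: gpath_def)
  have q0: "Q!0 = u" using Q(2) ne by (simp add: hd_conv_nth)
  have vQ: "v \<in> set Q"
  proof (rule ccontr)
    assume nv: "v \<notin> set Q"
    have evq: "E v (hd Q)" using e symE Q(2) by blast
    have "gpath V E (v#Q)" using gpath_Cons[OF Q(1) uV(2) nv evq] .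
    hence "length (v#Q) \<le> tau V E v" using tau_ge[OF finV, of E "v#Q" v] by simp
    thus False using Q(3) t by simp
  qed
  obtain k where k: "k < length Q" "Q!k = v" using vQ by (meson in_set_conv_nth)
  have k0: "k \<noteq> 0"
  proof
    assume "k = 0" hence "u = v" using k q0 by simp
    thus False using t by simp
  qed
  have k1: "k \<noteq> 1"
  proof
    assume k1: "k = 1"
    hence l2: "2 \<le> length Q" using k by simp
    have "gpath V E (tl Q)" "hd (tl Q) = v" "length (tl Q) = length Q - 1"
      using gpath_tl[OF Q(1) l2] k k1 by auto
    hence "length Q - 1 \<le> tau V E v" using tau_ge[OF finV, of E "tl Q" v] by simp
    thus False using Q(3) t by simp
  qed
  have kl: "Suc k < length Q"
  proof (rule ccontr)
    assume "\<not> Suc k < length Q"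
    hence "k = length Q - 1" using k by simp
    hence "last Q = v" using k ne by (simp add: last_conv_nth)
    hence "length Q \<le> tau V E v" using tau_ge[OF finV Q(1)] by simp
    thus False using Q(3) t by simp
  qed
  define a where "a = Q!(k-1)"
  define b where "b = Q!Suc k"
  have k2: "Suc (k-1) = k" using k0 by simp
  have ea: "E a v" unfolding a_def using gpath_edge[OF Q(1), of "k-1"] k2 k by simp
  have eb: "E b v" unfolding b_def using gpath_edge[OF Q(1) kl] k symE by blast
  have km: "k - 1 < length Q" "0 < length Q" using k(1) by linarith+
  have ua: "u \<noteq> a" unfolding a_def using nth_eq_iff_index_eq[OF dQ km(2) km(1)] q0 k0 k1 by simp
  have ub: "u \<noteq> b" unfolding b_def using nth_eq_iff_index_eq[OF dQ km(2) kl] q0 by simp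
  have ab: "a \<noteq> b" unfolding a_def b_def using nth_eq_iff_index_eq[OF dQ km(1) kl] by simp
  have uP: "u \<notin> set (P v)" using disj[OF v] u by blast
  have aP: "a \<notin> set (P v)"
  proof
    assume aP: "a \<in> set (P v)"
    obtain j where j: "0 \<le> j" "j < k - 1" "Q!j \<notin> set (P v)" "Q!Suc j \<in> set (P v)"
    proof -
      have p0: "Q!0 \<notin> set (P v)" using q0 uP by simp
      have p1: "\<not> Q!(k-1) \<notin> set (P v)" using aP unfolding a_def by simp
      from step_lemma[of "\<lambda>j. Q!j \<notin> set (P v)", OF p0 p1] show ?thesis using that by blast
    qed
    have "E (Q!j) (Q!Suc j)" using gpath_edge[OF Q(1)] j k by simp
    hence "E (Q!Suc j) (Q!j)" using symE by blast
    hence "Q!j = v" using crossP[OF v _ j(4) j(3)] by simp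
    hence "Q!j = Q!k" using k by simp
    moreover have jl: "j < length Q" using j k by simp
    ultimately have "j = k" using nth_eq_iff_index_eq[OF dQ jl k(1)] by simp
    thus False using j by simp
  qed
  obtain jv where jv: "jv < length C" "C!jv = v" using v by (meson in_set_conv_nth)
  let ?s1 = "C!((Suc jv) mod length C)" and ?s2 = "C!((jv + length C - 1) mod length C)"
  have nu: "u \<in> set (P v) \<or> u = ?s1 \<or> u = ?s2" using nbr[OF jv(1)] e jv(2) by simp
  have na: "a \<in> set (P v) \<or> a = ?s1 \<or> a = ?s2" using nbr[OF jv(1)] ea jv(2) by simp
  have nb: "b \<in> set (P v) \<or> b = ?s1 \<or> b = ?s2" using nbr[OF jv(1)] eb jv(2) by simp
  have bP: "b \<in> set (P v)"
  proof (rule ccontr)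
    assume "b \<notin> set (P v)"
    hence "u \<in> {?s1, ?s2}" "a \<in> {?s1, ?s2}" "b \<in> {?s1, ?s2}" using nu na nb uP aP by auto
    thus False using ua ub ab by auto
  qed
  have lP: "last Q \<in> set (P v)"
  proof (rule ccontr)
    assume nl: "last Q \<notin> set (P v)"
    have lq: "last Q = Q!(length Q - 1)" using ne by (simp add: last_conv_nth)
    have kl2: "Suc k \<le> length Q - 1" using kl by linarith
    obtain j where j: "Suc k \<le> j" "j < length Q - 1" "Q!j \<in> set (P v)" "Q!Suc j \<notin> set (P v)"
    proof -
      have p0: "Q!Suc k \<in> set (P v)" using bP unfolding b_def by simp
      have p1: "\<not> Q!(length Q - 1) \<in> set (P v)" using nl lq by simp
      from step_lemma[of "\<lambda>j. Q!j \<in> set (P v)", OF p0 p1 kl2] show ?thesis using that by blast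
    qed
    have "E (Q!j) (Q!Suc j)" using gpath_edge[OF Q(1)] j by simp
    hence "Q!Suc j = v" using crossP[OF v _ j(3) j(4)] by simp
    hence "Q!Suc j = Q!k" using k by simp
    moreover have jl: "Suc j < length Q" using j by simp
    ultimately have "Suc j = k" using nth_eq_iff_index_eq[OF dQ jl k(1)] by simp
    thus False using j by simp
  qed
  have "length Q \<le> tau V E (last Q)" using tau_ge[OF finV Q(1)] by simp
  thus ?thesis using lP Q(3) by auto
qed

lemma main: "detour_full V E"
  unfolding detour_full_def
proof (intro allI impI)
  fix k assume kk: "Min (tau V E ` V) \<le> k \<and> k \<le> Max (tau V E ` V)"
  show "\<exists>v\<in>V. tau V E v = k"
  proof (rule ccontr)
    assume nk: "\<not> (\<exists>v\<in>V. tau V E v = k)"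
    have fin: "finite (tau V E ` V)" using finV by simp
    have "C \<noteq> []" using lenC by auto
    hence "hd C \<in> V" using inV(1) by simp
    hence nev: "tau V E ` V \<noteq> {}" by blast
    obtain vl where vl: "vl \<in> V" "tau V E vl = Min (tau V E ` V)" using Min_in[OF fin nev] by auto
    obtain vh where vh: "vh \<in> V" "tau V E vh = Max (tau V E ` V)" using Max_in[OF fin nev] by auto
    have vlk: "tau V E vl < k" using vl kk nk by force
    have vhk: "k < tau V E vh" using vh kk nk by force
    have side: "\<not> (tau V E x < k \<and> k < tau V E y)"
      if c: "c \<in> set C" and x: "x \<in> set (c # P c)" and y: "y \<in> set (c # P c)" for c x y
    proof
      assume h: "tau V E x < k \<and> k < tau V E y"
      obtain z where z: "z \<in> set (c # P c)" "tau V E z = k"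
        using pend_ivt[OF c x y, of k] h by auto
      have "z \<in> V" using z(1) inV[OF c] by auto
      thus False using z nk by blast
    qed
    have ne_k: "tau V E x \<noteq> k" if "x \<in> V" for x using nk that by blast
    obtain cl where cl: "cl \<in> set C" "vl \<in> set (cl # P cl)" using vl(1) Vdef by auto
    obtain ch where ch: "ch \<in> set C" "vh \<in> set (ch # P ch)" using vh(1) Vdef by auto
    have clk: "tau V E cl < k"
    proof (rule ccontr)
      assume "\<not> tau V E cl < k"
      hence "k < tau V E cl" using ne_k[OF inV(1)[OF cl(1)]] by simp
      moreover have "cl \<in> set (cl # P cl)" by simp
      ultimately show False using side[OF cl(1) cl(2)] vlk by blast
    qed
    have chk: "k < tau V E ch"
    proof (rule ccontr)
      assume "\<not> k < tau V E ch"
      hence "tau V E ch < k" using ne_k[OF inV(1)[OF ch(1)]] by simp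
      moreover have "ch \<in> set (ch # P ch)" by simp
      ultimately show False using side[OF ch(1) _ ch(2)] vhk by blast
    qed
    obtain il where il: "il < length C" "C!il = cl" using cl(1) by (meson in_set_conv_nth)
    obtain ih where ih: "ih < length C" "C!ih = ch" using ch(1) by (meson in_set_conv_nth)
    define g where "g i = (k < tau V E (C!i))" for i
    have "g il \<noteq> g ih" using clk chk il ih by (simp add: g_def)
    from chain[OF this il(1) ih(1)] obtain i where i: "Suc i < length C" "g i \<noteq> g (Suc i)" by blast
    have ci: "C!i \<in> set C" "C!Suc i \<in> set C" using i by simp_all
    have md: "Suc i mod length C = Suc i" using i(1) by simp
    have "\<exists>i'<length C. {C!i, C!Suc i} = {C!i', C!(Suc i' mod length C)}"
      using i(1) md by (intro exI[of _ i]) simp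
    hence "R {C!i, C!Suc i}" unfolding R_def by blast
    hence e: "E (C!i) (C!Suc i)" by (simp add: ER)
    hence e2: "E (C!Suc i) (C!i)" using symE by blast
    have n1: "tau V E (C!i) \<noteq> k" "tau V E (C!Suc i) \<noteq> k" using ne_k inV(1) ci by auto
    show False
    proof (cases "g i")
      case True
      hence lt: "tau V E (C!Suc i) < k" "k < tau V E (C!i)" using i n1 by (auto simp: g_def)
      obtain w where w: "w \<in> set (P (C!Suc i))" "tau V E (C!i) \<le> tau V E w"
        using F4[OF ci(2) ci(1) e] lt by auto
      have "C!Suc i \<in> set (C!Suc i # P (C!Suc i))" "w \<in> set (C!Suc i # P (C!Suc i))" using w by simp_all
      from side[OF ci(2) this] show False using w lt by simp
    next
      case False
      hence lt: "tau V E (C!i) < k" "k < tau V E (C!Suc i)" using i n1 by (auto simp: g_def)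
      obtain w where w: "w \<in> set (P (C!i))" "tau V E (C!Suc i) \<le> tau V E w"
        using F4[OF ci(1) ci(2) e2] lt by auto
      have "C!i \<in> set (C!i # P (C!i))" "w \<in> set (C!i # P (C!i))" using w by simp_all
      from side[OF ci(1) this] show False using w lt by simp
    qed
  qed
qed

end

theorem theorem1p20:
  fixes V :: "'a set" and E :: "'a \<Rightarrow> 'a \<Rightarrow> bool"
  assumes "path_unicyclic V E"
  shows "detour_full V E"
proof -
  from assms obtain C P where h: "distinct C \<and> 3 \<le> length C \<and>
       (\<forall>c\<in>set C. distinct (P c) \<and> set (P c) \<inter> set C = {}) \<and>
       (\<forall>c\<in>set C. \<forall>d\<in>set C. c \<noteq> d \<longrightarrow> set (P c) \<inter> set (P d) = {}) \<and>
       (\<exists>c\<in>set C. P c \<noteq> []) \<and>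
       V = set C \<union> (\<Union>c\<in>set C. set (P c)) \<and>
       (\<forall>x y. E x y \<longleftrightarrow>
          (\<exists>i<length C. {x, y} = {C ! i, C ! ((Suc i) mod length C)}) \<or>
          (\<exists>c\<in>set C. P c \<noteq> [] \<and> {x, y} = {c, hd (P c)}) \<or>
          (\<exists>c\<in>set C. \<exists>i. Suc i < length (P c) \<and> {x, y} = {P c ! i, P c ! Suc i}))"
    unfolding path_unicyclic_def by blast
  have "pu V E C P" unfolding pu_def using h by blast
  thus ?thesis by (rule pu.main)
qed

end
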